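(* In every simple symmetric fractional hedonic game with $n$ agents, every sequence of IS deviations starting from the singleton partition has length $\mathcal O(n^2)$ (in particular it terminates). Moreover, there are simple symmetric fractional hedonic games with $n$ agents (for infinitely many $n$) admitting a sequence of IS deviations starting from the singleton partition of length $\Omega(n\sqrt n)$.
   Context: A fractional hedonic game (FHG) on agents $N$, $|N|=n$, is given by utility functions $v_i:N\to\mathbb R$ with $v_i(i)=0$; agent $i$'s utility for a coalition $C\ni i$ is $\frac{1}{|C|}\sum_{j\in C}v_i(j)$. It is simple if all $v_i(j)\in\{0,1\}$ and symmetric if $v_i(j)=v_j(i)$; a simple symmetric FHG is thus given by an undirected graph. The singleton partition is $\{\{i\}:i\in N\}$. An IS deviation of agent $i$ from partition $\pi$ to $\pi'$ is a move of $i$ alone from $\pi(i)$ into another coalition of $\pi$ or into a new singleton such that $i$ strictly prefers $\pi'(i)$ to $\pi(i)$ and every $j\in\pi'(i)\setminus\{i\}$ weakly prefers $\pi'(j)$ to $\pi(j)$. *)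

theory Defs
  imports Complex_Main
begin

text \<open>Agents are N = {0..<n}. A simple symmetric FHG is given by an undirected graph,
  i.e. a symmetric irreflexive relation E; v_i(j) = 1 if E i j and 0 otherwise.\<close>

definition simple_symmetric_fhg :: "(nat \<Rightarrow> nat \<Rightarrow> bool) \<Rightarrow> bool" where
  "simple_symmetric_fhg E \<longleftrightarrow> (\<forall>i j. E i j = E j i) \<and> (\<forall>i. \<not> E i i)"

definition fhg_val :: "(nat \<Rightarrow> nat \<Rightarrow> bool) \<Rightarrow> nat \<Rightarrow> nat \<Rightarrow> real" where
  "fhg_val E i j = (if E i j then 1 else 0)"

definition fhg_util :: "(nat \<Rightarrow> nat \<Rightarrow> bool) \<Rightarrow> nat \<Rightarrow> nat set \<Rightarrow> real" where
  "fhg_util E i C = (\<Sum>j\<in>C. fhg_val E i j) / real (card C)"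

definition singleton_partition :: "nat set \<Rightarrow> nat set set" where
  "singleton_partition N = {{i} | i. i \<in> N}"

definition coal :: "nat set set \<Rightarrow> nat \<Rightarrow> nat set" where
  "coal \<pi> i = (THE C. C \<in> \<pi> \<and> i \<in> C)"

text \<open>Partition obtained by moving agent i from its coalition into T
  (T a coalition of pi, or T = {} meaning a new singleton).\<close>
definition move :: "nat set set \<Rightarrow> nat \<Rightarrow> nat set \<Rightarrow> nat set set" where
  "move \<pi> i T = ((\<pi> - {coal \<pi> i, T}) \<union> {coal \<pi> i - {i}} - {{}}) \<union> {insert i T}"

definition IS_deviation ::
  "(nat \<Rightarrow> nat \<Rightarrow> bool) \<Rightarrow> nat set \<Rightarrow> nat set set \<Rightarrow> nat set set \<Rightarrow> bool" where
  "IS_deviation E N \<pi> \<pi>' \<longleftrightarrow>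
     (\<exists>i\<in>N. \<exists>T\<in>insert {} \<pi>. T \<noteq> coal \<pi> i \<and> \<pi>' = move \<pi> i T \<and>
        fhg_util E i (insert i T) > fhg_util E i (coal \<pi> i) \<and>
        (\<forall>j\<in>T. fhg_util E j (insert i T) \<ge> fhg_util E j (coal \<pi> j)))"

definition IS_sequence ::
  "(nat \<Rightarrow> nat \<Rightarrow> bool) \<Rightarrow> nat \<Rightarrow> (nat \<Rightarrow> nat set set) \<Rightarrow> nat \<Rightarrow> bool" where
  "IS_sequence E n ps k \<longleftrightarrow>
     ps 0 = singleton_partition {..<n} \<and>
     (\<forall>t<k. IS_deviation E {..<n} (ps t) (ps (Suc t)))"

end

theory Submission
  imports Defs
begin


lemma sum_val: "finite A \<Longrightarrow> (\<Sum>j\<in>A. fhg_val E i j) = real (card {j\<in>A. E i j})"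
  unfolding fhg_val_def by (simp add: sum.If_cases Int_def conj_commute)

definition pinv :: "(nat \<Rightarrow> nat \<Rightarrow> bool) \<Rightarrow> nat \<Rightarrow> nat set set \<Rightarrow> bool" where
  "pinv E n \<pi> \<longleftrightarrow> (\<forall>C\<in>\<pi>. C \<noteq> {} \<and> C \<subseteq> {..<n}) \<and> (\<forall>C\<in>\<pi>. \<forall>D\<in>\<pi>. C \<noteq> D \<longrightarrow> C \<inter> D = {})
     \<and> \<Union>\<pi> = {..<n} \<and> (\<forall>C\<in>\<pi>. \<forall>x\<in>C. \<forall>y\<in>C. x \<noteq> y \<longrightarrow> E x y)"

lemma coal_eq: assumes "pinv E n \<pi>" "C \<in> \<pi>" "i \<in> C" shows "coal \<pi> i = C"
  unfolding coal_def
proof (rule the_equality)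
  show "C \<in> \<pi> \<and> i \<in> C" using assms by simp
  fix D assume "D \<in> \<pi> \<and> i \<in> D" then show "D = C" using assms unfolding pinv_def by blast
qed

lemma inv_finite: "pinv E n \<pi> \<Longrightarrow> finite \<pi>"
  unfolding pinv_def by (metis finite_Pow_iff finite_lessThan finite_subset subsetI PowI)

lemma inv_finite_mem: "pinv E n \<pi> \<Longrightarrow> C \<in> \<pi> \<Longrightarrow> finite C"
  unfolding pinv_def by (meson finite_lessThan finite_subset)

lemma util_clique:
  assumes "simple_symmetric_fhg E" "finite C" "i \<in> C" "\<forall>x\<in>C. \<forall>y\<in>C. x \<noteq> y \<longrightarrow> E x y"
  shows "fhg_util E i C = (real (card C) - 1) / real (card C)"
proof -
  have "{j\<in>C. E i j} = C - {i}" using assms unfolding simple_symmetric_fhg_def by auto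
  moreover have "card C \<ge> 1" using assms by (metis One_nat_def Suc_leI card_gt_0_iff empty_iff)
  moreover have "real (card (C - {i})) = real (card C) - 1"
    using \<open>card C \<ge> 1\<close> assms(2,3) by (simp add: card_Diff_singleton of_nat_diff)
  ultimately show ?thesis unfolding fhg_util_def using assms by (simp add: sum_val)
qed

definition Phi :: "nat set set \<Rightarrow> nat" where "Phi \<pi> = (\<Sum>C\<in>\<pi>. card C ^ 2)"

lemma Phi_le: assumes "pinv E n \<pi>" shows "Phi \<pi> \<le> n ^ 2"
proof -
  have fin: "finite \<pi>" using inv_finite[OF assms] .
  have "Phi \<pi> \<le> (\<Sum>C\<in>\<pi>. card C * n)" unfolding Phi_def power2_eq_square
  proof (rule sum_mono)
    fix C assume "C \<in> \<pi>"
    then have "card C \<le> n" using assms unfolding pinv_def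
      by (metis card_lessThan card_mono finite_lessThan)
    then show "card C * card C \<le> card C * n" by simp
  qed
  also have "\<dots> = (\<Sum>C\<in>\<pi>. card C) * n" by (simp add: sum_distrib_right)
  also have "(\<Sum>C\<in>\<pi>. card C) = card (\<Union>\<pi>)"
    by (rule card_Union_disjoint[symmetric]) (use assms inv_finite_mem in \<open>auto simp: pairwise_def disjnt_def pinv_def\<close>)
  also have "card (\<Union>\<pi>) = n" using assms unfolding pinv_def by simp
  finally show ?thesis by (simp add: power2_eq_square)
qed

lemma inv_init: "simple_symmetric_fhg E \<Longrightarrow> pinv E n (singleton_partition {..<n})"
  unfolding pinv_def singleton_partition_def by auto

lemma Phi_init: "Phi (singleton_partition {..<n}) = n"
proof -
  have "singleton_partition {..<n} = (\<lambda>i. {i}) ` {..<n}" unfolding singleton_partition_def by auto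
  then show ?thesis unfolding Phi_def by (simp add: sum.reindex)
qed

lemma dev_step:
  assumes E: "simple_symmetric_fhg E" and I: "pinv E n \<pi>" and i: "i < n"
    and T: "T \<in> insert {} \<pi>" and ne: "T \<noteq> coal \<pi> i"
    and u1: "fhg_util E i (insert i T) > fhg_util E i (coal \<pi> i)"
    and u2: "\<forall>j\<in>T. fhg_util E j (insert i T) \<ge> fhg_util E j (coal \<pi> j)"
  shows "pinv E n (move \<pi> i T) \<and> Phi (move \<pi> i T) \<ge> Phi \<pi> + 2"
proof -
  have sym: "\<And>x y. E x y = E y x" and irr: "\<And>x. \<not> E x x" using E unfolding simple_symmetric_fhg_def by auto
  have P1: "\<And>C. C \<in> \<pi> \<Longrightarrow> C \<noteq> {} \<and> C \<subseteq> {..<n}"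
   and P2: "\<And>C D. C \<in> \<pi> \<Longrightarrow> D \<in> \<pi> \<Longrightarrow> C \<noteq> D \<Longrightarrow> C \<inter> D = {}"
   and P3: "\<Union>\<pi> = {..<n}"
   and P4: "\<And>C x y. C \<in> \<pi> \<Longrightarrow> x \<in> C \<Longrightarrow> y \<in> C \<Longrightarrow> x \<noteq> y \<Longrightarrow> E x y"
    using I unfolding pinv_def by simp_all
  obtain C where C: "C \<in> \<pi>" "i \<in> C" using P3 i by auto
  have cC: "coal \<pi> i = C" using coal_eq[OF I C] .
  have finC: "finite C" using inv_finite_mem[OF I C(1)] .
  define c where "c = card C"
  have c1: "c \<ge> 1" unfolding c_def using finC C(2) by (metis One_nat_def Suc_leI card_gt_0_iff empty_iff)
  have uC: "fhg_util E i C = (real c - 1) / real c"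
    unfolding c_def by (rule util_clique[OF E finC C(2)]) (use P4 C in blast)
  have uC0: "(real c - 1) / real c \<ge> 0" using c1 by simp
  have iT: "i \<notin> T" using T ne cC P2 C by auto
  have Tne: "T \<noteq> {}"
  proof
    assume "T = {}"
    then have "fhg_util E i (insert i T) = 0" unfolding fhg_util_def fhg_val_def using irr by simp
    then show False using u1 cC uC uC0 by simp
  qed
  then have Tp: "T \<in> \<pi>" using T by auto
  have finT: "finite T" using inv_finite_mem[OF I Tp] .
  define t where "t = card T"
  have t1: "t \<ge> 1" unfolding t_def using finT Tne by (simp add: Suc_leI card_gt_0_iff)
  have CT: "C \<noteq> T" using ne cC by simp
  have adj: "\<forall>j\<in>T. E i j"
  proof (rule ccontr)
    assume "\<not> (\<forall>j\<in>T. E i j)"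
    then obtain j where j: "j \<in> T" "\<not> E i j" by auto
    have cj: "coal \<pi> j = T" using coal_eq[OF I Tp j(1)] .
    have ujT: "fhg_util E j T = (real t - 1) / real t"
      unfolding t_def by (rule util_clique[OF E finT j(1)]) (use P4 Tp in blast)
    have "{y\<in>insert i T. E j y} = T - {j}" using j sym irr P4[OF Tp] iT by auto
    moreover have "fhg_util E j (insert i T) = real (card {y\<in>insert i T. E j y}) / real (card (insert i T))"
      unfolding fhg_util_def by (subst sum_val) (simp_all add: finT)
    ultimately have ujI: "fhg_util E j (insert i T) = (real t - 1) / (real t + 1)"
      using finT iT j(1) t1 by (simp add: card_Diff_singleton of_nat_diff t_def)
    have "fhg_util E j T \<le> fhg_util E j (insert i T)" using u2 j(1) cj by metis
    then have "(real t - 1) / (real t + 1) \<ge> (real t - 1) / real t" using ujT ujI by metis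
    then have "t \<le> 1" using t1
      by (smt (verit, best) divide_strict_left_mono le_add_same_cancel1 of_nat_0_le_iff of_nat_1 of_nat_le_iff zero_less_mult_iff)
    then have "T = {j}" using t1 j(1) finT unfolding t_def by (metis card_1_singletonE le_antisym singletonD)
    then have "(\<Sum>y\<in>insert i T. fhg_val E i y) = 0" unfolding fhg_val_def using irr j
      by (intro sum.neutral) auto
    then have "fhg_util E i (insert i T) = 0" unfolding fhg_util_def by simp
    then show False using u1 cC uC uC0 by simp
  qed
  have uiT: "fhg_util E i (insert i T) = real t / (real t + 1)"
  proof -
    have "fhg_util E i (insert i T) = (real (card (insert i T)) - 1) / real (card (insert i T))"
      by (rule util_clique[OF E]) (use finT adj sym P4[OF Tp] in auto)
    then show ?thesis using iT finT unfolding t_def by simp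
  qed
  have ct: "c \<le> t"
  proof -
    have "real t / (real t + 1) > (real c - 1) / real c" using u1 uiT cC uC by simp
    then have "real t * real c > (real c - 1) * (real t + 1)" using c1
      by (simp add: field_simps)
    then show ?thesis by (simp add: algebra_simps)
  qed
  define C' where "C' = C - {i}"
  define R where "R = \<pi> - {C, T}"
  have mv: "move \<pi> i T = (R \<union> {C'} - {{}}) \<union> {insert i T}"
    unfolding move_def cC C'_def R_def by simp
  have Rne: "{} \<notin> R" using P1 unfolding R_def by auto
  have piR: "\<pi> = insert C (insert T R)" using C(1) Tp unfolding R_def by auto
  have finR: "finite R" using inv_finite[OF I] unfolding R_def by simp
  have CR: "C \<notin> insert T R" using CT unfolding R_def by simp
  have TR: "T \<notin> R" unfolding R_def by simp
  have PhiPi: "Phi \<pi> = Phi R + c^2 + t^2"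
    unfolding Phi_def piR using finR CR TR c_def t_def by simp
  have disjR: "\<And>D. D \<in> R \<Longrightarrow> D \<inter> C = {} \<and> D \<inter> T = {}" using P2 C(1) Tp unfolding R_def by blast
  have iTR: "insert i T \<notin> R"
  proof
    assume "insert i T \<in> R" then show False using disjR C(2) by blast
  qed
  have C'R: "C' \<noteq> {} \<Longrightarrow> C' \<notin> R"
  proof
    assume "C' \<noteq> {}" "C' \<in> R" then show False using disjR unfolding C'_def by blast
  qed
  have C'iT: "C' \<noteq> insert i T" unfolding C'_def by blast
  have cardC': "card C' = c - 1" unfolding C'_def c_def using finC C(2) by simp
  have cardiT: "card (insert i T) = t + 1" unfolding t_def using finT iT by simp
  have PhiMv: "Phi (move \<pi> i T) \<ge> Phi \<pi> + 2"
  proof (cases "C' = {}")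
    case True
    then have "move \<pi> i T = insert (insert i T) R" unfolding mv using Rne by auto
    then have "Phi (move \<pi> i T) = Phi R + (t+1)^2" unfolding Phi_def using finR iTR cardiT by simp
    moreover have "c = 1" using cardC' True c1 by simp
    ultimately show ?thesis using PhiPi t1 by (simp add: power2_eq_square)
  next
    case False
    then have "move \<pi> i T = insert (insert i T) (insert C' R)" unfolding mv using Rne by auto
    then have "Phi (move \<pi> i T) = Phi R + (c-1)^2 + (t+1)^2" unfolding Phi_def
      using finR iTR cardiT C'R[OF False] C'iT cardC' by simp
    moreover obtain c0 where "c = Suc c0" using c1 by (cases c) auto
    ultimately show ?thesis using PhiPi ct by (simp add: power2_eq_square)
  qed
  have invMv: "pinv E n (move \<pi> i T)"
  proof -
    have A1: "\<forall>D\<in>move \<pi> i T. D \<noteq> {} \<and> D \<subseteq> {..<n}"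
      unfolding mv C'_def R_def using P1 C(1) Tp i by blast
    have A2: "\<forall>D1\<in>move \<pi> i T. \<forall>D2\<in>move \<pi> i T. D1 \<noteq> D2 \<longrightarrow> D1 \<inter> D2 = {}"
    proof (intro ballI impI)
      fix D1 D2 assume d: "D1 \<in> move \<pi> i T" "D2 \<in> move \<pi> i T" "D1 \<noteq> D2"
      have "D1 \<in> R \<or> D1 = C' \<or> D1 = insert i T" using d(1) unfolding mv by blast
      moreover have "D2 \<in> R \<or> D2 = C' \<or> D2 = insert i T" using d(2) unfolding mv by blast
      moreover have "\<And>D. D \<in> R \<Longrightarrow> D \<inter> C' = {} \<and> D \<inter> insert i T = {}"
        using disjR C(2) unfolding C'_def by blast
      moreover have "C' \<inter> insert i T = {}" using P2[OF C(1) Tp CT] unfolding C'_def by blast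
      moreover have "\<And>D1 D2. D1 \<in> R \<Longrightarrow> D2 \<in> R \<Longrightarrow> D1 \<noteq> D2 \<Longrightarrow> D1 \<inter> D2 = {}"
        using P2 unfolding R_def by blast
      ultimately show "D1 \<inter> D2 = {}" using d(3) by (metis inf_commute)
    qed
    have A3: "\<Union>(move \<pi> i T) = {..<n}"
    proof -
      have "\<Union>(move \<pi> i T) = \<Union>R \<union> C' \<union> insert i T" unfolding mv by auto
      also have "\<dots> = \<Union>\<pi>" unfolding piR C'_def using C(2) by auto
      finally show ?thesis using P3 by simp
    qed
    have A4: "\<forall>D\<in>move \<pi> i T. \<forall>x\<in>D. \<forall>y\<in>D. x \<noteq> y \<longrightarrow> E x y"
    proof (intro ballI impI)
      fix D x y assume d: "D \<in> move \<pi> i T" "x \<in> D" "y \<in> D" "x \<noteq> y"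
      have "D \<in> R \<or> D = C' \<or> D = insert i T" using d(1) unfolding mv by blast
      then show "E x y"
      proof (elim disjE)
        assume "D \<in> R" then show ?thesis using P4 d unfolding R_def by blast
      next
        assume "D = C'" then show ?thesis using P4[OF C(1)] d unfolding C'_def by blast
      next
        assume "D = insert i T" then show ?thesis using P4[OF Tp] d adj sym by auto
      qed
    qed
    show ?thesis unfolding pinv_def using A1 A2 A3 A4 by blast
  qed
  show ?thesis using invMv PhiMv by simp
qed

lemma upper:
  assumes E: "simple_symmetric_fhg E" and S: "IS_sequence E n ps k"
  shows "real k \<le> 1 * real n ^ 2"
proof -
  have "\<forall>t\<le>k. pinv E n (ps t) \<and> Phi (ps t) \<ge> n + 2 * t"
  proof (intro allI impI)
    fix t assume "t \<le> k"
    then show "pinv E n (ps t) \<and> Phi (ps t) \<ge> n + 2 * t"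
    proof (induction t)
      case 0
      then show ?case using S inv_init[OF E] Phi_init unfolding IS_sequence_def by simp
    next
      case (Suc t)
      then have ih: "pinv E n (ps t)" "Phi (ps t) \<ge> n + 2 * t" by simp_all
      have "IS_deviation E {..<n} (ps t) (ps (Suc t))" using S Suc.prems unfolding IS_sequence_def by simp
      then obtain i T where "i \<in> {..<n}" "T \<in> insert {} (ps t)" "T \<noteq> coal (ps t) i"
        "ps (Suc t) = move (ps t) i T"
        "fhg_util E i (insert i T) > fhg_util E i (coal (ps t) i)"
        "\<forall>j\<in>T. fhg_util E j (insert i T) \<ge> fhg_util E j (coal (ps t) j)"
        unfolding IS_deviation_def by blast
      then have "pinv E n (ps (Suc t)) \<and> Phi (ps (Suc t)) \<ge> Phi (ps t) + 2"
        using dev_step[OF E ih(1)] by simp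
      then show ?case using ih by simp
    qed
  qed
  then have "n + 2 * k \<le> n ^ 2" using Phi_le by (meson le_trans order_refl)
  then have "k \<le> n ^ 2" by linarith
  then show ?thesis by (metis mult_1 of_nat_le_iff of_nat_power)
qed



definition KE :: "nat \<Rightarrow> nat \<Rightarrow> bool" where "KE i j \<longleftrightarrow> i \<noteq> j"

lemma KE_ss: "simple_symmetric_fhg KE" unfolding simple_symmetric_fhg_def KE_def by auto

definition cls :: "nat \<Rightarrow> (nat \<Rightarrow> nat) \<Rightarrow> nat \<Rightarrow> nat set" where
  "cls n f l = {i. i < n \<and> f i = l}"

definition part :: "nat \<Rightarrow> (nat \<Rightarrow> nat) \<Rightarrow> nat set set" where
  "part n f = cls n f ` (f ` {..<n})"

definition prof :: "nat \<Rightarrow> (nat \<Rightarrow> nat) \<Rightarrow> nat \<Rightarrow> nat" where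
  "prof n f l = card (cls n f l)"

lemma cls_fin[simp]: "finite (cls n f l)" unfolding cls_def by simp

lemma part_inv: "pinv KE n (part n f)"
  unfolding pinv_def part_def cls_def KE_def by auto

lemma cls_in_part: "cls n f l \<noteq> {} \<Longrightarrow> cls n f l \<in> part n f"
  unfolding part_def cls_def by auto

lemma part_upd:
  assumes x: "x < n" "f x = a" and ab: "a \<noteq> b" and Bne: "cls n f b \<noteq> {}"
  shows "move (part n f) x (cls n f b) = part n (f(x := b))"
proof -
  let ?A = "cls n f a" and ?B = "cls n f b" and ?g = "f(x := b)"
  have xA: "x \<in> ?A" using x unfolding cls_def by simp
  have cx: "coal (part n f) x = ?A" using coal_eq[OF part_inv cls_in_part xA] xA by auto
  have gcl: "\<And>l. cls n ?g l = (if l = a then ?A - {x} else if l = b then insert x ?B else cls n f l)"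
    using x ab unfolding cls_def by auto
  show ?thesis
  proof (rule set_eqI, rule iffI)
    fix D assume "D \<in> move (part n f) x ?B"
    then have "(D \<in> part n f \<and> D \<noteq> ?A \<and> D \<noteq> ?B) \<or> (D = ?A - {x} \<and> D \<noteq> {}) \<or> D = insert x ?B"
      unfolding move_def cx by auto
    then show "D \<in> part n ?g"
    proof (elim disjE conjE)
      assume D: "D \<in> part n f" "D \<noteq> ?A" "D \<noteq> ?B"
      then obtain y where y: "y < n" "D = cls n f (f y)" unfolding part_def by auto
      have "f y \<noteq> a" "f y \<noteq> b" using D y by auto
      then have "y \<noteq> x" "D = cls n ?g (?g y)" using y x gcl by auto
      then show ?thesis unfolding part_def using y by auto
    next
      assume D: "D = ?A - {x}" "D \<noteq> {}"
      then obtain y where y: "y \<in> ?A" "y \<noteq> x" by auto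
      then have "y < n" "?g y = a" unfolding cls_def by auto
      then show ?thesis unfolding part_def using D gcl by (metis image_eqI lessThan_iff)
    next
      assume D: "D = insert x ?B"
      have "?g x = b" by simp
      then show ?thesis unfolding part_def using D gcl x ab by (metis image_eqI lessThan_iff)
    qed
  next
    fix D assume "D \<in> part n ?g"
    then obtain y where y: "y < n" "D = cls n ?g (?g y)" unfolding part_def by auto
    show "D \<in> move (part n f) x ?B"
    proof (cases "?g y = a")
      case True
      then have "y \<noteq> x" using ab by auto
      then have "D = ?A - {x}" "y \<in> D" using y True gcl unfolding cls_def by auto
      then show ?thesis unfolding move_def cx by auto
    next
      case F1: False
      show ?thesis
      proof (cases "?g y = b")
        case True
        then show ?thesis using y gcl ab unfolding move_def cx by auto
      next
        case False
        then have yx: "y \<noteq> x" by auto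
        then have "D = cls n f (f y)" "f y \<noteq> a" "f y \<noteq> b" using y gcl F1 False by auto
        moreover have "y \<in> cls n f (f y)" using y unfolding cls_def by simp
        moreover have "x \<notin> cls n f (f y)" using x \<open>f y \<noteq> a\<close> unfolding cls_def by auto
        moreover have "cls n f (f y) \<noteq> ?B" using \<open>f y \<noteq> b\<close> \<open>y \<in> cls n f (f y)\<close> unfolding cls_def by auto
        ultimately show ?thesis unfolding move_def cx part_def using y xA by auto
      qed
    qed
  qed
qed

lemma step_dev:
  assumes x: "x < n" "f x = a" and ab: "a \<noteq> b" and le: "prof n f a \<le> prof n f b"
  shows "IS_deviation KE {..<n} (part n f) (part n (f(x := b)))"
proof -
  let ?A = "cls n f a" and ?B = "cls n f b"
  have xA: "x \<in> ?A" using x unfolding cls_def by simp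
  have cx: "coal (part n f) x = ?A" using coal_eq[OF part_inv cls_in_part xA] xA by auto
  define ca where "ca = card ?A"
  define t where "t = card ?B"
  have ca1: "ca \<ge> 1" unfolding ca_def using xA by (metis One_nat_def Suc_leI card_gt_0_iff cls_fin empty_iff)
  have cat: "ca \<le> t" using le unfolding ca_def t_def prof_def .
  have Bne: "?B \<noteq> {}" using ca1 cat unfolding t_def by auto
  have Bp: "?B \<in> part n f" using cls_in_part[OF Bne] .
  have xB: "x \<notin> ?B" using x ab unfolding cls_def by auto
  have ne: "?B \<noteq> coal (part n f) x" using cx xA xB by auto
  have uA: "fhg_util KE x ?A = (real ca - 1) / real ca"
    unfolding ca_def by (rule util_clique[OF KE_ss cls_fin xA]) (simp add: KE_def)
  have uB: "\<And>z. z \<in> insert x ?B \<Longrightarrow> fhg_util KE z (insert x ?B) = real t / (real t + 1)"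
  proof -
    fix z assume z: "z \<in> insert x ?B"
    have "fhg_util KE z (insert x ?B) = (real (card (insert x ?B)) - 1) / real (card (insert x ?B))"
      by (rule util_clique[OF KE_ss _ z]) (simp_all add: KE_def)
    then show "fhg_util KE z (insert x ?B) = real t / (real t + 1)" using xB unfolding t_def by simp
  qed
  have u1: "fhg_util KE x (insert x ?B) > fhg_util KE x (coal (part n f) x)"
  proof -
    have "(real ca - 1) * (real t + 1) < real t * real ca" using cat by (simp add: algebra_simps)
    then have "(real ca - 1) / real ca < real t / (real t + 1)" using ca1
      by (simp add: divide_simps)
    then show ?thesis using uA uB[of x] cx by simp
  qed
  have u2: "\<forall>j\<in>?B. fhg_util KE j (insert x ?B) \<ge> fhg_util KE j (coal (part n f) j)"
  proof
    fix j assume j: "j \<in> ?B"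
    have cj: "coal (part n f) j = ?B" using coal_eq[OF part_inv Bp j] .
    have "fhg_util KE j ?B = (real t - 1) / real t"
      unfolding t_def by (rule util_clique[OF KE_ss cls_fin j]) (simp add: KE_def)
    moreover have "(real t - 1) / real t \<le> real t / (real t + 1)"
    proof -
      have "t \<ge> 1" using ca1 cat by simp
      moreover have "(real t - 1) * (real t + 1) \<le> real t * real t" by (simp add: algebra_simps)
      ultimately show ?thesis by (simp add: divide_simps)
    qed
    ultimately show "fhg_util KE j (insert x ?B) \<ge> fhg_util KE j (coal (part n f) j)"
      using uB[of j] j cj by simp
  qed
  show ?thesis unfolding IS_deviation_def
    using x Bp ne part_upd[OF x ab Bne] u1 u2 by blast
qed

lemma prof_upd:
  assumes x: "x < n" "f x = a" and ab: "a \<noteq> b"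
  shows "prof n (f(x := b)) = (prof n f)(a := prof n f a - 1, b := prof n f b + 1)"
proof
  fix l
  have gcl: "cls n (f(x := b)) l = (if l = a then cls n f a - {x} else if l = b then insert x (cls n f b) else cls n f l)"
    using x ab unfolding cls_def by auto
  have "x \<in> cls n f a" "x \<notin> cls n f b" using x ab unfolding cls_def by auto
  then show "prof n (f(x := b)) l = ((prof n f)(a := prof n f a - 1, b := prof n f b + 1)) l"
    unfolding prof_def gcl using ab by auto
qed



inductive Steps :: "(nat \<Rightarrow> nat) \<Rightarrow> (nat \<Rightarrow> nat) \<Rightarrow> nat \<Rightarrow> bool" where
  refl: "Steps s s 0"
| step: "Steps s s' k \<Longrightarrow> a \<noteq> b \<Longrightarrow> 1 \<le> s' a \<Longrightarrow> s' a \<le> s' b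
          \<Longrightarrow> Steps s (s'(a := s' a - 1, b := s' b + 1)) (Suc k)"

lemma Steps_trans: "Steps s2 s3 k2 \<Longrightarrow> Steps s1 s2 k1 \<Longrightarrow> Steps s1 s3 (k1 + k2)"
proof (induction rule: Steps.induct)
  case (refl s)
  then show ?case by simp
next
  case (step s s' k a b)
  have "Steps s1 s' (k1 + k)" using step by simp
  from Steps.step[OF this step(2,3,4)] show ?case by (simp only: add_Suc_right)
qed

lemma Steps_one: "a \<noteq> b \<Longrightarrow> 1 \<le> s a \<Longrightarrow> s a \<le> s b \<Longrightarrow> Steps s (s(a := s a - 1, b := s b + 1)) 1"
  using Steps.step[OF Steps.refl] by simp

lemma realize:
  assumes "Steps s s' k"
  shows "prof n f = s \<Longrightarrow> \<exists>g ps. prof n g = s' \<and> ps 0 = part n f \<and> ps k = part n g \<and>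
           (\<forall>t<k. IS_deviation KE {..<n} (ps t) (ps (Suc t)))"
  using assms
proof (induction rule: Steps.induct)
  case (refl s)
  then show ?case by (intro exI[of _ f] exI[of _ "\<lambda>_. part n f"]) simp
next
  case (step s s' k a b)
  then obtain g ps where g: "prof n g = s'" "ps 0 = part n f" "ps k = part n g"
    "\<forall>t<k. IS_deviation KE {..<n} (ps t) (ps (Suc t))" by blast
  have "cls n g a \<noteq> {}" using \<open>1 \<le> s' a\<close> g(1) unfolding prof_def by auto
  then obtain x where x: "x < n" "g x = a" unfolding cls_def by auto
  define g' where "g' = g(x := b)"
  define ps' where "ps' = ps(Suc k := part n g')"
  have "prof n g' = s'(a := s' a - 1, b := s' b + 1)"
    unfolding g'_def using prof_upd[of x n g a b, OF x \<open>a \<noteq> b\<close>] g(1) by simp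
  moreover have "IS_deviation KE {..<n} (part n g) (part n g')"
    unfolding g'_def using step_dev[of x n g a b, OF x \<open>a \<noteq> b\<close>] \<open>s' a \<le> s' b\<close> g(1) by simp
  ultimately show ?case using g
    by (intro exI[of _ g'] exI[of _ ps']) (auto simp: ps'_def less_Suc_eq)
qed

lemma absorb:
  assumes "finite A" "l \<notin> A" "\<forall>y\<in>A. s y = 1" "s l \<ge> 1"
  shows "Steps s (\<lambda>x. if x \<in> A then 0 else if x = l then s l + card A else s x) (card A)"
  using assms
proof (induction A rule: finite_induct)
  case empty
  have "(\<lambda>x. if x \<in> {} then 0 else if x = l then s l + card {} else s x) = s" by auto
  show ?case unfolding \<open>(\<lambda>x. if x \<in> {} then 0 else if x = l then s l + card {} else s x) = s\<close> using Steps.refl[of s] by simp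
next
  case (insert y A)
  let ?s1 = "\<lambda>x. if x \<in> A then 0 else if x = l then s l + card A else s x"
  have S1: "Steps s ?s1 (card A)" using insert by simp
  have "y \<noteq> l" using insert by auto
  then have "Steps s (?s1(y := ?s1 y - 1, l := ?s1 l + 1)) (Suc (card A))"
    using Steps.step[OF S1, of y l] insert by simp
  moreover have "?s1(y := ?s1 y - 1, l := ?s1 l + 1) =
     (\<lambda>x. if x \<in> insert y A then 0 else if x = l then s l + card (insert y A) else s x)"
    using insert \<open>y \<noteq> l\<close> by (auto simp: fun_eq_iff)
  ultimately show ?case using insert by simp
qed

definition Tr :: "nat \<Rightarrow> nat" where "Tr j = (\<Sum>i<j. i)"

lemma Tr_Suc: "Tr (Suc j) = Tr j + j" unfolding Tr_def by simp

lemma Tr_mono: "j \<le> m \<Longrightarrow> Tr j \<le> Tr m"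
  unfolding Tr_def by (rule sum_mono2) auto

definition Bld :: "nat \<Rightarrow> nat \<Rightarrow> nat \<Rightarrow> nat" where
  "Bld m j x = (if x < j then x + 1 else if x < m then 1 else if x < m + Tr j then 0
               else if x < m + Tr m then 1 else 0)"

lemma build: "j \<le> m \<Longrightarrow> \<exists>k. Steps (Bld m 0) (Bld m j) k"
proof (induction j)
  case 0
  then show ?case using Steps.refl by blast
next
  case (Suc j)
  then obtain k where k: "Steps (Bld m 0) (Bld m j) k" by auto
  define A where "A = {m + Tr j ..< m + Tr j + j}"
  have TS: "Tr j + j \<le> Tr m" using Tr_mono[OF Suc.prems] Tr_Suc by simp
  have "Steps (Bld m j) (\<lambda>x. if x \<in> A then 0 else if x = j then Bld m j j + card A else Bld m j x) (card A)"
    by (rule absorb) (use Suc.prems TS in \<open>auto simp: A_def Bld_def\<close>)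
  moreover have "(\<lambda>x. if x \<in> A then 0 else if x = j then Bld m j j + card A else Bld m j x) = Bld m (Suc j)"
    using Suc.prems TS by (auto simp: fun_eq_iff A_def Bld_def Tr_Suc)
  ultimately show ?case using Steps_trans k by metis
qed

lemma chain:
  assumes "a < tp" "\<forall>i j. a \<le> i \<longrightarrow> i < j \<longrightarrow> j \<le> tp \<longrightarrow> s i < s j" "s a \<ge> 1"
  shows "Steps s (s(a := s a - 1, tp := s tp + 1)) (tp - a)"
  using assms
proof (induction "tp - a" arbitrary: a)
  case 0
  then show ?case by simp
next
  case (Suc d)
  show ?case
  proof (cases "Suc a = tp")
    case True
    have st: "s a \<le> s tp" using Suc.prems(2) Suc.prems(1) by (meson order_refl less_imp_le)
    have "a \<noteq> tp" "tp - a = 1" using True by auto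
    then show ?thesis using Steps_one[of a tp s, OF _ Suc.prems(3) st] by simp
  next
    case False
    have a1: "Suc a < tp" using False Suc.prems by simp
    have sa: "s a < s (Suc a)" using Suc.prems a1 by simp
    have sa': "s a \<le> s (Suc a) - 1" using sa by simp
    have IH: "Steps s (s(Suc a := s (Suc a) - 1, tp := s tp + 1)) (tp - Suc a)"
      using Suc.hyps(1)[of "Suc a"] Suc.hyps(2) Suc.prems a1 sa by simp
    let ?s1 = "s(Suc a := s (Suc a) - 1, tp := s tp + 1)"
    have "Steps s (?s1(a := ?s1 a - 1, Suc a := ?s1 (Suc a) + 1)) (Suc (tp - Suc a))"
      by (rule Steps.step[OF IH]) (use Suc.prems a1 sa' in auto)
    moreover have "?s1(a := ?s1 a - 1, Suc a := ?s1 (Suc a) + 1) = s(a := s a - 1, tp := s tp + 1)"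
      using a1 sa by (auto simp: fun_eq_iff)
    moreover have "Suc (tp - Suc a) = tp - a" using a1 by simp
    ultimately show ?thesis by simp
  qed
qed

lemma waves:
  assumes "a < tp" "\<forall>i j. a \<le> i \<longrightarrow> i < j \<longrightarrow> j \<le> tp \<longrightarrow> s i < s j"
  shows "t \<le> s a \<Longrightarrow> Steps s (s(a := s a - t, tp := s tp + t)) (t * (tp - a))"
proof (induction t)
  case 0
  then show ?case using Steps.refl[of s] by simp
next
  case (Suc t)
  let ?st = "s(a := s a - t, tp := s tp + t)"
  have IH: "Steps s ?st (t * (tp - a))" using Suc.IH Suc.prems by (meson Suc_leD)
  have inc: "\<forall>i j. a \<le> i \<longrightarrow> i < j \<longrightarrow> j \<le> tp \<longrightarrow> ?st i < ?st j"
  proof (intro allI impI)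
    fix i j assume h: "a \<le> i" "i < j" "j \<le> tp"
    have "s i < s j" using assms(2) h by blast
    moreover have "?st i \<le> s i" using h by auto
    moreover have "?st j \<ge> s j" using h assms(1) by auto
    ultimately show "?st i < ?st j" by linarith
  qed
  have C1: "Steps ?st (?st(a := ?st a - 1, tp := ?st tp + 1)) (tp - a)"
    by (rule chain[OF assms(1) inc]) (use Suc.prems assms(1) in auto)
  have eq: "?st(a := ?st a - 1, tp := ?st tp + 1) = s(a := s a - Suc t, tp := s tp + Suc t)"
    using assms(1) by (auto simp: fun_eq_iff)
  have C2: "Steps ?st (s(a := s a - Suc t, tp := s tp + Suc t)) (tp - a)" using C1 unfolding eq .
  have "Steps s (s(a := s a - Suc t, tp := s tp + Suc t)) (t * (tp - a) + (tp - a))"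
    by (rule Steps_trans[OF C2 IH])
  then show ?case by (metis add.commute mult_Suc)
qed

lemma outer:
  assumes "b \<le> tp" "\<forall>i j. b \<le> i \<longrightarrow> i < j \<longrightarrow> j \<le> tp \<longrightarrow> s i < s j" "s b \<ge> 1"
  shows "\<exists>s' k. Steps s s' k \<and> k \<ge> (\<Sum>i\<in>{b..<tp}. s i * (tp - i))"
  using assms
proof (induction "tp - b" arbitrary: b s)
  case 0
  then show ?case using Steps.refl by fastforce
next
  case (Suc d)
  have bt: "b < tp" using Suc.hyps(2) by simp
  let ?s1 = "s(b := s b - s b, tp := s tp + s b)"
  have W: "Steps s ?s1 (s b * (tp - b))" using waves[OF bt Suc.prems(2), of "s b"] by (metis order_refl)
  have inc: "\<forall>i j. Suc b \<le> i \<longrightarrow> i < j \<longrightarrow> j \<le> tp \<longrightarrow> ?s1 i < ?s1 j"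
  proof (intro allI impI)
    fix i j assume h: "Suc b \<le> i" "i < j" "j \<le> tp"
    have "s i < s j" using Suc.prems(2) h by simp
    then show "?s1 i < ?s1 j" using h by auto
  qed
  have s1b: "?s1 (Suc b) \<ge> 1"
  proof (cases "Suc b = tp")
    case True then show ?thesis using Suc.prems(3) by simp
  next
    case False
    then have "s b < s (Suc b)" using Suc.prems(2) bt by simp
    then show ?thesis using False by simp
  qed
  obtain s' k where sk: "Steps ?s1 s' k" "k \<ge> (\<Sum>i\<in>{Suc b..<tp}. ?s1 i * (tp - i))"
    using Suc.hyps(1)[OF _ _ inc s1b] Suc.hyps(2) bt by (metis Suc_diff_Suc Suc_leI nat.inject)
  have "(\<Sum>i\<in>{Suc b..<tp}. ?s1 i * (tp - i)) = (\<Sum>i\<in>{Suc b..<tp}. s i * (tp - i))"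
    by (rule sum.cong) auto
  moreover have "(\<Sum>i\<in>{b..<tp}. s i * (tp - i)) = s b * (tp - b) + (\<Sum>i\<in>{Suc b..<tp}. s i * (tp - i))"
    using bt by (simp add: sum.atLeast_Suc_lessThan)
  ultimately show ?case using Steps_trans[OF sk(1) W] sk(2) by (intro exI[of _ s'] exI) auto
qed



lemma gsum: "2 * (\<Sum>i<p. i + 1) = p * (p + 1::nat)"
  by (induction p) (auto simp: algebra_simps)

lemma S6: "6 * (\<Sum>i<p. (i + 1) * (p - i)) = p * (p + 1) * (p + (2::nat))"
proof (induction p)
  case 0
  then show ?case by simp
next
  case (Suc p)
  have "(\<Sum>i<Suc p. (i + 1) * (Suc p - i)) = (\<Sum>i<Suc p. (i + 1) * (p - i) + (i + 1))"
    by (rule sum.cong) (auto simp: Suc_diff_le algebra_simps)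
  also have "\<dots> = (\<Sum>i<Suc p. (i + 1) * (p - i)) + (\<Sum>i<Suc p. i + 1)"
    by (rule sum.distrib)
  also have "(\<Sum>i<Suc p. (i + 1) * (p - i)) = (\<Sum>i<p. (i + 1) * (p - i))" by simp
  finally have e: "(\<Sum>i<Suc p. (i + 1) * (Suc p - i)) = (\<Sum>i<p. (i + 1) * (p - i)) + (\<Sum>i<Suc p. i + 1)" .
  have g: "2 * (\<Sum>i<Suc p. i + 1) = Suc p * (Suc p + 1)" by (rule gsum)
  have "6 * (\<Sum>i<Suc p. (i + 1) * (Suc p - i)) = p * (p + 1) * (p + 2) + 3 * (Suc p * (Suc p + 1))"
    unfolding e using Suc.IH g by simp
  then show ?case by (simp add: algebra_simps)
qed

lemma Tr_0[simp]: "Tr 0 = 0" unfolding Tr_def by simp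

lemma Tr2: "2 * Tr m + m = m * m"
  by (induction m) (auto simp: Tr_Suc algebra_simps)

lemma prof_id: "prof n id = (\<lambda>l. if l < n then 1 else 0)"
proof
  fix l
  have "cls n id l = (if l < n then {l} else {})" unfolding cls_def by auto
  then show "prof n id l = (if l < n then 1 else 0)" unfolding prof_def by simp
qed

lemma part_id: "part n id = singleton_partition {..<n}"
  unfolding part_def singleton_partition_def cls_def by auto

lemma lower_m:
  assumes m: "m \<ge> 2"
  shows "\<exists>ps k. IS_sequence KE (m + Tr m) ps k \<and> 6 * k \<ge> (m - 1) * m * (m + 1)"
proof -
  define n where "n = m + Tr m"
  have Tr0: "Tr 0 = 0" unfolding Tr_def by simp
  have p0: "prof n id = Bld m 0"
    unfolding prof_id Bld_def n_def Tr0 by (auto simp: fun_eq_iff)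
  obtain kb where kb: "Steps (Bld m 0) (Bld m m) kb" using build[of m m] by auto
  have stair: "\<And>i. i < m \<Longrightarrow> Bld m m i = i + 1" unfolding Bld_def by simp
  have inc: "\<forall>i j. 0 \<le> i \<longrightarrow> i < j \<longrightarrow> j \<le> m - 1 \<longrightarrow> Bld m m i < Bld m m j"
    using stair m by auto
  obtain s' k where sk: "Steps (Bld m m) s' k" "k \<ge> (\<Sum>i\<in>{0..<m-1}. Bld m m i * (m - 1 - i))"
    using outer[of 0 "m - 1" "Bld m m", OF _ inc] stair m by auto
  have "(\<Sum>i\<in>{0..<m-1}. Bld m m i * (m - 1 - i)) = (\<Sum>i<m-1. (i + 1) * (m - 1 - i))"
    using stair by (auto simp: atLeast0LessThan intro!: sum.cong)
  moreover have "6 * (\<Sum>i<m-1. (i + 1) * (m - 1 - i)) = (m - 1) * m * (m + 1)"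
    using S6[of "m - 1"] m by (simp add: algebra_simps)
  ultimately have k6: "6 * k \<ge> (m - 1) * m * (m + 1)" using sk(2) by linarith
  have St: "Steps (Bld m 0) s' (kb + k)" by (rule Steps_trans[OF sk(1) kb])
  obtain g ps where gps: "ps 0 = part n id" "\<forall>t<kb + k. IS_deviation KE {..<n} (ps t) (ps (Suc t))"
    using realize[OF St p0] by blast
  have "IS_sequence KE n ps (kb + k)" unfolding IS_sequence_def using gps part_id by simp
  moreover have "6 * (kb + k) \<ge> (m - 1) * m * (m + 1)" using k6 by simp
  ultimately show ?thesis unfolding n_def by blast
qed

lemma real_bound:
  fixes M N S :: real
  assumes "M \<ge> 2" "2 * N = M * M + M" "6 * S \<ge> (M - 1) * M * (M + 1)"
  shows "S \<ge> (1/12) * N * sqrt N"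
proof -
  have MM: "M * M \<ge> 2 * M" using assms(1) by (simp add: mult_right_mono)
  have N0: "N \<ge> 0" using assms MM by linarith
  have NM: "N \<le> M * M" using assms MM by linarith
  have "sqrt N \<le> sqrt (M * M)" using NM by (rule real_sqrt_le_mono)
  then have sq: "sqrt N \<le> M" using assms by simp
  have "N * sqrt N \<le> N * M" using sq N0 by (simp add: mult_left_mono)
  also have "\<dots> \<le> M * M * M" using NM assms by (simp add: mult_right_mono)
  finally have a: "N * sqrt N \<le> M * M * M" .
  have M4: "M * M \<ge> 4" using MM assms(1) by linarith
  have "M * M * M \<ge> 4 * M" using mult_right_mono[OF M4, of M] assms(1) by simp
  moreover have "(M - 1) * M * (M + 1) = M * M * M - M" by (simp add: algebra_simps)
  ultimately have "M * M * M \<le> 2 * ((M - 1) * M * (M + 1))" using assms(1) by linarith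
  then show ?thesis using a assms(3) by linarith
qed

lemma lower:
  "\<exists>d::real. d > 0 \<and> infinite {n. \<exists>E ps k. simple_symmetric_fhg E \<and> IS_sequence E n ps k
                              \<and> real k \<ge> d * real n * sqrt (real n)}"
proof (intro exI conjI)
  show "(1/12::real) > 0" by simp
  let ?S = "{n. \<exists>E ps k. simple_symmetric_fhg E \<and> IS_sequence E n ps k
                              \<and> real k \<ge> (1/12) * real n * sqrt (real n)}"
  show "infinite ?S"
  proof
    assume "finite ?S"
    then have "\<exists>b. \<forall>n\<in>?S. n \<le> b" by (simp only: finite_nat_set_iff_bounded_le)
    then obtain b where b: "\<forall>n\<in>?S. n \<le> b" by (rule exE)
    define m where "m = b + 2"
    have m2: "m \<ge> 2" unfolding m_def by simp
    obtain ps k where pk: "IS_sequence KE (m + Tr m) ps k" "6 * k \<ge> (m - 1) * m * (m + 1)"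
      using lower_m[OF m2] by blast
    have hk: "real k \<ge> (1/12) * real (m + Tr m) * sqrt (real (m + Tr m))"
    proof (rule real_bound)
      show "real m \<ge> 2" using m2 by simp
      have "2 * (m + Tr m) = m * m + m" using Tr2[of m] by simp
      then show "2 * real (m + Tr m) = real m * real m + real m" by (metis of_nat_add of_nat_mult of_nat_numeral)
      have "real (6 * k) \<ge> real ((m - 1) * m * (m + 1))" using pk(2) by (simp only: of_nat_le_iff)
      moreover have "real ((m - 1) * m * (m + 1)) = (real m - 1) * real m * (real m + 1)"
        using m2 by (simp add: of_nat_diff algebra_simps)
      moreover have "real (6 * k) = 6 * real k" by simp
      ultimately show "6 * real k \<ge> (real m - 1) * real m * (real m + 1)" by linarith
    qed
    have "m + Tr m \<in> ?S" unfolding mem_Collect_eq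
      by (rule exI[of _ KE], rule exI[of _ ps], rule exI[of _ k]) (intro conjI KE_ss pk(1) hk)
    then have "m + Tr m \<le> b" using b by (rule bspec[rotated])
    moreover have "m + Tr m > b" unfolding m_def by simp
    ultimately show False by simp
  qed
qed

theorem proposition5p4:
  shows "(\<exists>c::real. \<forall>n E ps k. simple_symmetric_fhg E \<longrightarrow> IS_sequence E n ps k
            \<longrightarrow> real k \<le> c * real n ^ 2)
       \<and> (\<exists>d::real. d > 0 \<and>
            infinite {n. \<exists>E ps k. simple_symmetric_fhg E \<and> IS_sequence E n ps k
                              \<and> real k \<ge> d * real n * sqrt (real n)})"
  using upper lower by blast


end
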